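(* Let $a>0$, $\beta>0$, let $\lambda$ be feasible, let $0<\xi<a$, and let $0<C_L<1$. Then there exists $0<\delta_L(\beta,\lambda,\xi/a,C_L)\le\delta_\mu(\beta,\lambda)$ such that for every $0<\delta\le\delta_L$ and every $k\ge k_0(\delta)$ we have $L\ge C_L$, where \[ L=\left(1-\mathrm{e}^{-2k\xi}\right)+\frac{\lambda^2\delta^{2\beta}+4}{(2\delta+\lambda\delta^{\beta})^2}\,\mathrm{e}^{-4ka}\left(\mathrm{e}^{2k\xi}-1\right). \]
   Context: For $0<\delta<1$ and constants $\beta>0$, $\lambda\in\mathbb{R}$, put $\mu=\delta+\lambda\delta^{\beta}$. The constant $\lambda$ is called feasible if $\lambda>0$ when $0<\beta<1$, $\lambda\ge -1$ when $\beta=1$, and $\lambda\neq 0$ when $\beta>1$. For feasible $\lambda$, $\delta_\mu=\delta_\mu(\beta,\lambda)\in(0,1)$ denotes a number such that $\mu\ge 0$ for all $0<\delta\le\delta_\mu$. Define \[ k_0(\delta)=\frac{1}{2a}\ln\!\left(\frac{1}{2\delta^2+\lambda\delta^{\beta+1}}\right). \] *)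

theory Defs
  imports Complex_Main
begin

definition feasible :: "real \<Rightarrow> real \<Rightarrow> bool" where
  "feasible bet lam \<longleftrightarrow>
     (bet < 1 \<longrightarrow> lam > 0) \<and> (bet = 1 \<longrightarrow> lam \<ge> -1) \<and> (bet > 1 \<longrightarrow> lam \<noteq> 0)"

definition mu :: "real \<Rightarrow> real \<Rightarrow> real \<Rightarrow> real" where
  "mu bet lam \<delta> = \<delta> + lam * \<delta> powr bet"

definition is_delta_mu :: "real \<Rightarrow> real \<Rightarrow> real \<Rightarrow> bool" where
  "is_delta_mu bet lam d \<longleftrightarrow> 0 < d \<and> d < 1 \<and> (\<forall>\<delta>. 0 < \<delta> \<and> \<delta> \<le> d \<longrightarrow> mu bet lam \<delta> \<ge> 0)"

definition k0 :: "real \<Rightarrow> real \<Rightarrow> real \<Rightarrow> real \<Rightarrow> real" where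
  "k0 a bet lam \<delta> = 1 / (2 * a) * ln (1 / (2 * \<delta>^2 + lam * \<delta> powr (bet + 1)))"

definition Lfun :: "real \<Rightarrow> real \<Rightarrow> real \<Rightarrow> real \<Rightarrow> real \<Rightarrow> real \<Rightarrow> real" where
  "Lfun a \<xi> bet lam \<delta> k =
     (1 - exp (-2 * k * \<xi>))
     + (lam^2 * \<delta> powr (2 * bet) + 4) / (2 * \<delta> + lam * \<delta> powr bet)^2
       * exp (-4 * k * a) * (exp (2 * k * \<xi>) - 1)"

end

theory Submission
  imports Defs
begin

theorem lemma4p2:
  fixes bet lam d_mu r C_L :: real
  assumes "bet > 0" and "feasible bet lam" and "is_delta_mu bet lam d_mu"
    and "0 < r" and "r < 1" and "0 < C_L" and "C_L < 1"
  shows "\<exists>delta_L. 0 < delta_L \<and> delta_L \<le> d_mu \<and>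
    (\<forall>a \<xi> \<delta> k. a > 0 \<and> 0 < \<xi> \<and> \<xi> < a \<and> \<xi> / a = r \<and> 0 < \<delta> \<and> \<delta> \<le> delta_L
       \<and> k \<ge> k0 a bet lam \<delta> \<longrightarrow> Lfun a \<xi> bet lam \<delta> k \<ge> C_L)"
proof -
  have dm: "0 < d_mu" "d_mu < 1" "\<And>\<delta>. 0 < \<delta> \<Longrightarrow> \<delta> \<le> d_mu \<Longrightarrow> \<delta> + lam * \<delta> powr bet \<ge> 0"
    using assms(3) unfolding is_delta_mu_def mu_def by auto
  define q where "q = (1 - C_L) powr (1/r)"
  have q0: "0 < q" using assms unfolding q_def by simp
  have q1: "q < 1" unfolding q_def using assms powr_less_mono2[of "1/r" "1 - C_L" 1] by simp
  have qr: "q powr r = 1 - C_L" unfolding q_def using assms by (simp add: powr_powr)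
  define dl where "dl = min d_mu (q / (2 + \<bar>lam\<bar>))"
  have dl0: "0 < dl" unfolding dl_def using dm q0 by (simp add: add_pos_nonneg)
  show ?thesis
  proof (intro exI[of _ dl] conjI allI impI)
    show "0 < dl" by fact
    show "dl \<le> d_mu" unfolding dl_def by simp
    fix a \<xi> \<delta> k
    assume H: "a > 0 \<and> 0 < \<xi> \<and> \<xi> < a \<and> \<xi> / a = r \<and> 0 < \<delta> \<and> \<delta> \<le> dl \<and> k \<ge> k0 a bet lam \<delta>"
    hence a0: "a > 0" and d0: "0 < \<delta>" and ddl: "\<delta> \<le> dl" and kk: "k \<ge> k0 a bet lam \<delta>"
      and xi: "\<xi> = r * a" by auto
    have ddm: "\<delta> \<le> d_mu" using ddl unfolding dl_def by simp
    have dq: "\<delta> * (2 + \<bar>lam\<bar>) \<le> q" using ddl unfolding dl_def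
      by (simp add: pos_le_divide_eq add_pos_nonneg)
    have d1: "\<delta> \<le> 1" using ddm dm by simp
    have mu0: "\<delta> + lam * \<delta> powr bet \<ge> 0" using dm(3) d0 ddm by simp
    have pb: "\<delta> powr (bet + 1) = \<delta> * \<delta> powr bet" using d0 by (simp add: powr_add)
    have pb1: "\<delta> powr bet \<le> 1" using d0 d1 assms(1) by (simp add: powr_le1)
    have pb0: "\<delta> powr bet \<ge> 0" by simp
    define D where "D = 2 * \<delta>^2 + lam * \<delta> powr (bet + 1)"
    have DD: "D = \<delta> * \<delta> + \<delta> * (\<delta> + lam * \<delta> powr bet)"
      unfolding D_def pb by (simp add: power2_eq_square algebra_simps)
    have Dpos: "D > 0" unfolding DD using d0 mu0
      by (simp add: add_pos_nonneg)
    have "\<bar>lam * \<delta> powr bet\<bar> \<le> \<bar>lam\<bar>"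
      using pb1 pb0 by (simp add: abs_mult mult_left_le)
    hence "lam * (\<delta> * \<delta> powr bet) \<le> \<delta> * \<bar>lam\<bar>" using d0
      by (smt (verit, ccfv_threshold) mult.left_commute mult_le_cancel_left_pos)
    moreover have "\<delta> * \<delta> \<le> \<delta>" using d0 d1 by (simp add: mult_left_le)
    ultimately have "D \<le> \<delta> * (2 + \<bar>lam\<bar>)" unfolding D_def pb
      by (simp add: power2_eq_square algebra_simps)
    hence Dq: "D \<le> q" using dq by simp
    hence D1: "D < 1" using q1 by simp
    have Dr: "D powr r \<le> 1 - C_L" using Dq Dpos assms(4) qr
      by (metis less_eq_real_def powr_mono2)
    have k0e: "k0 a bet lam \<delta> = - ln D / (2 * a)"
      unfolding k0_def D_def[symmetric] using Dpos by (simp add: ln_div)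
    have lnD: "ln D < 0" using Dpos D1 by simp
    have "- ln D \<le> 2 * a * k" proof -
      have "- ln D / (2 * a) \<le> k" using kk unfolding k0e .
      hence "- ln D / (2 * a) * (2 * a) \<le> k * (2 * a)" using a0 by (intro mult_right_mono) auto
      moreover have "- ln D / (2 * a) * (2 * a) = - ln D" using a0 by simp
      ultimately show ?thesis by (simp only: mult.commute)
    qed
    have k0': "k \<ge> 0"
    proof -
      have "0 < - ln D / (2 * a)" using lnD a0 by (intro divide_pos_pos) auto
      thus ?thesis using kk unfolding k0e by linarith
    qed
    have "-2 * k * \<xi> \<le> r * ln D"
      proof -
      have "r * (- ln D) \<le> r * (2 * a * k)" using \<open>- ln D \<le> 2 * a * k\<close> assms(4) by (intro mult_left_mono) auto
      thus ?thesis using xi by (simp add: algebra_simps)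
    qed
    hence "exp (-2 * k * \<xi>) \<le> exp (r * ln D)" by simp
    also have "exp (r * ln D) = D powr r" using Dpos by (simp add: powr_def)
    finally have e1: "exp (-2 * k * \<xi>) \<le> 1 - C_L" using Dr by simp
    have "exp (2 * k * \<xi>) \<ge> 1" using k0' H by simp
    hence "(lam^2 * \<delta> powr (2 * bet) + 4) / (2 * \<delta> + lam * \<delta> powr bet)^2
       * exp (-4 * k * a) * (exp (2 * k * \<xi>) - 1) \<ge> 0"
      by (intro mult_nonneg_nonneg divide_nonneg_nonneg) auto
    thus "Lfun a \<xi> bet lam \<delta> k \<ge> C_L" unfolding Lfun_def using e1 by linarith
  qed
qed

end
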